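(* Let $q=3^m$ with $m\ge1$, and for $b\in\mathbb{F}_{q^2}$ let $\delta(b)=\#\{u\in\mathbb{F}_{q^2}:\ 2u^{q+1}+u^2=b\}$. Then for every $b\in\mathbb{F}_{q^2}^*$, $\delta(b)=2$ if $\mathrm{Tr}_{\mathbb{F}_{q^2}/\mathbb{F}_q}(b)$ is a non-square in $\mathbb{F}_q$, and $\delta(b)=0$ if $\mathrm{Tr}_{\mathbb{F}_{q^2}/\mathbb{F}_q}(b)$ is a square in $\mathbb{F}_q$ (including $0$). Moreover, there are exactly $\frac{q^2+q-2}{2}$ elements $b\in\mathbb{F}_{q^2}^*$ with $\delta(b)=0$ and exactly $\frac{q^2-q}{2}$ elements $b\in\mathbb{F}_{q^2}^*$ with $\delta(b)=2$.
   Context: $\mathrm{Tr}_{\mathbb{F}_{q^2}/\mathbb{F}_q}(b)=b+b^q$. $\delta(b)$ equals $\delta_f(1,b+\tfrac14)$ for $f(x)=x^{q+2}$, where $\delta_f(a,b)=\#\{x\in\mathbb{F}_{q^2}: f(x+a)-f(x)=b\}$. *)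

theory Defs
  imports Main
begin

definition subfield_q :: "nat \<Rightarrow> 'a::field set" where
  "subfield_q q = {x. x ^ q = x}"

definition trace_q :: "nat \<Rightarrow> 'a::field \<Rightarrow> 'a" where
  "trace_q q b = b + b ^ q"

definition is_square_in :: "'a set \<Rightarrow> 'a::field \<Rightarrow> bool" where
  "is_square_in S t \<longleftrightarrow> (\<exists>y\<in>S. y ^ 2 = t)"

definition delta_q :: "nat \<Rightarrow> 'a::{field,finite} \<Rightarrow> nat" where
  "delta_q q b = card {u. 2 * u ^ (q + 1) + u ^ 2 = b}"

end

theory Submission imports Defs "HOL-Computational_Algebra.Polynomial" begin

lemma roots_bound:
  fixes c :: "'a::field"
  assumes "k > 0"
  shows "card {x. x ^ k = c} \<le> k"
proof -
  define p where "p = monom (1::'a) k + [:-c:]"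
  have deg: "degree p = k" unfolding p_def
    using assms by (subst degree_add_eq_left) (auto simp: degree_monom_eq)
  hence "p \<noteq> 0" using assms by auto
  hence "card {x. poly p x = 0} \<le> degree p" by (rule card_poly_roots_bound)
  moreover have "{x. poly p x = 0} = {x. x ^ k = c}"
    by (auto simp: p_def poly_monom)
  ultimately show ?thesis using deg by simp
qed

lemma of_nat_card_zero: "of_nat (card (UNIV::'a set)) = (0::'a::{finite,comm_ring_1})"
proof -
  have "(\<Sum>y\<in>UNIV. y) = (\<Sum>y\<in>UNIV. (y + 1::'a))"
    by (rule sum.reindex_bij_betw[symmetric])
       (auto simp: bij_betw_def inj_on_def intro!: image_eqI[where x="_ - 1"])
  also have "\<dots> = (\<Sum>y\<in>UNIV. y) + of_nat (card (UNIV::'a set))"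
    by (simp add: sum.distrib)
  finally show ?thesis by simp
qed

lemma fermat_field:
  fixes x :: "'a::{finite,field}"
  assumes "x \<noteq> 0"
  shows "x ^ (card (UNIV::'a set) - 1) = 1"
proof -
  let ?A = "{y::'a. y \<noteq> 0}"
  have cA: "card ?A = card (UNIV::'a set) - 1"
  proof -
    have "?A = UNIV - {0}" by auto
    thus ?thesis by (simp add: card_Diff_subset)
  qed
  have "(\<Prod>y\<in>?A. y) = (\<Prod>y\<in>?A. x * y)"
    by (rule prod.reindex_bij_betw[symmetric])
       (use assms in \<open>auto simp: bij_betw_def inj_on_def image_iff intro!: exI[where x="_ / x"]\<close>)
  also have "\<dots> = x ^ card ?A * (\<Prod>y\<in>?A. y)"
    by (simp add: prod.distrib)
  finally have "x ^ card ?A * (\<Prod>y\<in>?A. y) = 1 * (\<Prod>y\<in>?A. y)" by simp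
  moreover have "(\<Prod>y\<in>?A. y) \<noteq> 0" by (simp add: prod_zero_iff)
  ultimately show ?thesis using cA by (metis mult_right_cancel)
qed

lemma fermat_all:
  fixes x :: "'a::{finite,field}"
  shows "x ^ (card (UNIV::'a set)) = x"
proof (cases "x = 0")
  case True thus ?thesis by (simp add: zero_power finite_UNIV_card_ge_0)
next
  case False
  have pos: "0 < card (UNIV::'a set)" by (rule finite_UNIV_card_ge_0) simp
  have "card (UNIV::'a set) = Suc (card (UNIV::'a set) - 1)" using pos by simp
  hence "x ^ (card (UNIV::'a set)) = x * x ^ (card (UNIV::'a set) - 1)" by (metis power_Suc)
  thus ?thesis using fermat_field[OF False] by simp
qed

lemma frob3:
  fixes a b :: "'a::comm_ring_1"
  assumes "(3::'a) = 0"
  shows "(a + b) ^ (3 ^ k) = a ^ (3 ^ k) + b ^ (3 ^ k)"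
proof (induction k)
  case 0 thus ?case by simp
next
  case (Suc k)
  have e: "\<And>x::'a. x ^ (3 ^ Suc k) = (x ^ (3 ^ k)) ^ 3"
    by (simp add: power_mult[symmetric] mult.commute)
  have c: "\<And>x y::'a. (x + y) ^ 3 = x ^ 3 + y ^ 3"
  proof -
    fix x y :: 'a
    have "(x + y) ^ 3 = x ^ 3 + y ^ 3 + 3 * (x^2*y + x*y^2)"
      by (simp add: power2_eq_square power3_eq_cube algebra_simps)
    thus "(x + y) ^ 3 = x ^ 3 + y ^ 3" using assms by simp
  qed
  show ?case by (simp only: e Suc c)
qed

lemma power_card_bound:
  fixes f :: "'a \<Rightarrow> 'b"
  assumes "finite A" "\<And>c. card {x\<in>A. f x = c} \<le> k"
  shows "card A \<le> k * card (f ` A)"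
proof -
  have "A = (\<Union>c\<in>f ` A. {x\<in>A. f x = c})" by auto
  hence "card A \<le> (\<Sum>c\<in>f ` A. card {x\<in>A. f x = c})"
    by (metis card_UN_le assms(1) finite_imageI)
  also have "\<dots> \<le> (\<Sum>c\<in>f ` A. k)" by (rule sum_mono) (use assms in auto)
  finally show ?thesis by (simp add: mult.commute)
qed



context
  fixes q m :: nat
  assumes three: "(3::'a::{field,finite}) = 0"
    and Qc: "card (UNIV::'a set) = q * q"
    and qm: "q = 3 ^ m" and m1: "m \<ge> 1"
begin

lemma q_odd: "odd q" using qm by simp
lemma q_ge3: "q \<ge> 3" using qm m1
  by (metis One_nat_def le_add_diff_inverse power_increasing power_one_right zero_less_numeral one_le_numeral)

lemma two_ne: "(2::'a) \<noteq> 0"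
proof
  assume "(2::'a) = 0"
  moreover have "(3::'a) = 2 + 1" by simp
  ultimately show False using three by simp
qed

lemma two_eq: "(2::'a) = - 1"
proof -
  have "(2::'a) + 1 = 3" by simp
  thus ?thesis using three by (simp add: eq_neg_iff_add_eq_0)
qed

lemma add_q: "((a::'a) + b) ^ q = a ^ q + b ^ q"
  using frob3[OF three] qm by simp

lemma neg_q: "(- (a::'a)) ^ q = - (a ^ q)"
  using q_odd by (simp add: power_minus_odd)

lemma diff_q: "((a::'a) - b) ^ q = a ^ q - b ^ q"
  using add_q[of a "-b"] neg_q[of b] by simp

lemma invol: "((x::'a) ^ q) ^ q = x"
  using fermat_all[of x] Qc by (simp add: power_mult[symmetric])

lemma card_nz: "card {x::'a. x \<noteq> 0} = q * q - 1"
proof -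
  have "{x::'a. x \<noteq> 0} = UNIV - {0}" by auto
  thus ?thesis using Qc by (simp add: card_Diff_subset)
qed

lemma pow_Qm1: "(x::'a) \<noteq> 0 \<Longrightarrow> x ^ (q * q - 1) = 1"
  using fermat_field[of x] Qc by simp

lemma fiber_bound:
  assumes "k > 0"
  shows "card {x::'a. x \<noteq> 0} \<le> k * card ((\<lambda>x. x ^ k) ` {x::'a. x \<noteq> 0})"
proof (rule power_card_bound)
  fix c :: 'a
  have "card {x \<in> {x::'a. x \<noteq> 0}. x ^ k = c} \<le> card {x::'a. x ^ k = c}"
    by (rule card_mono) auto
  also have "\<dots> \<le> k" by (rule roots_bound[OF assms])
  finally show "card {x \<in> {x::'a. x \<noteq> 0}. x ^ k = c} \<le> k" .
qed simp

lemma sq_exists: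
  assumes tq: "(t::'a) ^ q = t" and t0: "t \<noteq> 0"
  shows "\<exists>s. s ^ 2 = t"
proof -
  obtain k where k: "q = 2 * k + 1" using q_odd oddE by blast
  have k1: "k \<ge> 1" using q_ge3 k by simp
  define h where "h = 2 * k * k + 2 * k"
  have Qh: "q * q - 1 = 2 * h" unfolding h_def k by (simp add: algebra_simps)
  have h0: "h > 0" using k1 unfolding h_def by simp
  define S where "S = (\<lambda>x. x ^ 2) ` {x::'a. x \<noteq> 0}"
  define R where "R = {x::'a. x ^ h = 1}"
  have "q * q - 1 \<le> 2 * card S" using fiber_bound[of 2] card_nz unfolding S_def by simp
  hence cS: "h \<le> card S" using Qh by simp
  have SR: "S \<subseteq> R"
  proof
    fix z assume "z \<in> S"
    then obtain y where y: "y \<noteq> 0" "z = y ^ 2" unfolding S_def by auto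
    have "z ^ h = y ^ (q * q - 1)" using y Qh by (simp add: power_mult[symmetric])
    thus "z \<in> R" using pow_Qm1[OF y(1)] unfolding R_def by simp
  qed
  have cR: "card R \<le> h" unfolding R_def by (rule roots_bound[OF h0])
  have "card S \<le> card R" by (rule card_mono) (simp_all add: SR)
  hence "S = R" using card_subset_eq[of R S] SR cS cR by simp
  moreover have "t \<in> R"
  proof -
    have "t ^ q = t ^ (2 * k) * t" using k by simp
    hence t2k: "t ^ (2 * k) = 1" using tq t0 by simp
    have "h = (2 * k) * (k + 1)" unfolding h_def by (simp add: algebra_simps)
    hence "t ^ h = (t ^ (2 * k)) ^ (k + 1)" by (simp only: power_mult)
    thus ?thesis using t2k unfolding R_def by simp
  qed
  ultimately show ?thesis unfolding S_def by auto
qed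

lemma card_F: "card {x::'a. x ^ q = x} = q"
proof -
  define R where "R = {x::'a. x ^ (q - 1) = 1}"
  define N where "N = (\<lambda>x. x ^ (q + 1)) ` {x::'a. x \<noteq> 0}"
  have qq: "q * q - 1 = (q - 1) * (q + 1)" using q_ge3 by (simp add: algebra_simps)
  have "(q + 1) * (q - 1) \<le> (q + 1) * card N"
    using fiber_bound[of "q+1"] card_nz qq unfolding N_def by (simp add: mult.commute)
  hence cN: "q - 1 \<le> card N" using mult_le_cancel1[of "q+1" "q-1" "card N"] by simp
  have NR: "N \<subseteq> R"
  proof
    fix z assume "z \<in> N"
    then obtain y where y: "y \<noteq> 0" "z = y ^ (q + 1)" unfolding N_def by auto
    have "z ^ (q - 1) = y ^ ((q + 1) * (q - 1))" using y(2) by (simp only: power_mult)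
    also have "(q + 1) * (q - 1) = q * q - 1" using qq by (simp only: mult.commute)
    finally have "z ^ (q - 1) = y ^ (q * q - 1)" .
    thus "z \<in> R" using pow_Qm1[OF y(1)] unfolding R_def by simp
  qed
  have cR: "card R \<le> q - 1" unfolding R_def by (rule roots_bound) (use q_ge3 in simp)
  have cR2: "card R = q - 1" using card_mono[OF _ NR] cN cR by simp
  have "{x::'a. x ^ q = x} = insert 0 R"
  proof (rule set_eqI)
    fix x :: 'a
    have qs: "x ^ q = x ^ (q - 1) * x" using q_ge3
      by (metis Suc_diff_1 less_le_trans power_Suc2 zero_less_numeral zero_less_one le_numeral_extra(4) less_numeral_extra(1) dual_order.strict_trans1)
    show "x \<in> {x. x ^ q = x} \<longleftrightarrow> x \<in> insert 0 R"
      unfolding R_def using qs q_ge3 by (cases "x = 0") auto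
  qed
  moreover have "0 \<notin> R" unfolding R_def using q_ge3 by (simp add: zero_power)
  ultimately show ?thesis using cR2 q_ge3 by simp
qed

lemma neg_self: "- (x::'a) = x \<Longrightarrow> x = 0"
proof -
  assume "- x = x"
  hence "x + x = 0" by (metis add.right_inverse)
  hence "2 * x = 0" by (simp only: mult_2)
  thus "x = 0" using two_ne by simp
qed

lemma g_eq: "2 * (u::'a) ^ (q + 1) + u ^ 2 = u * (u - u ^ q)"
proof -
  have "2 * u ^ (q + 1) = - (u * u ^ q)" by (simp only: two_eq power_Suc mult_minus1 Suc_eq_plus1[symmetric])
  thus ?thesis by (simp add: power2_eq_square right_diff_distrib)
qed

lemma sol_props:
  assumes b0: "(b::'a) \<noteq> 0" and gu: "2 * u ^ (q + 1) + u ^ 2 = b"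
  defines "s \<equiv> u - u ^ q"
  shows "s \<noteq> 0" "s ^ q = - s" "s ^ 2 = trace_q q b" "u * s = b"
proof -
  show us: "u * s = b" using gu g_eq unfolding s_def by simp
  thus "s \<noteq> 0" using b0 by auto
  show sq: "s ^ q = - s" unfolding s_def by (simp add: diff_q invol)
  have "trace_q q b = u * s + (u * s) ^ q" unfolding trace_q_def using us by simp
  also have "\<dots> = u * s - u ^ q * s" by (simp add: power_mult_distrib sq)
  also have "\<dots> = s ^ 2" unfolding s_def by (simp add: power2_eq_square algebra_simps)
  finally show "s ^ 2 = trace_q q b" by simp
qed

lemma sq_zero:
  assumes b0: "(b::'a) \<noteq> 0" and sq: "is_square_in (subfield_q q) (trace_q q b)"
  shows "delta_q q b = 0"
proof -
  have "{u. 2 * u ^ (q + 1) + u ^ 2 = b} = {}"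
  proof (rule ccontr)
    assume "{u. 2 * u ^ (q + 1) + u ^ 2 = b} \<noteq> {}"
    then obtain u where gu: "2 * u ^ (q + 1) + u ^ 2 = b" by auto
    define s where "s = u - u ^ q"
    note P = sol_props[OF b0 gu, folded s_def]
    obtain y where y: "y ^ q = y" "y ^ 2 = trace_q q b"
      using sq unfolding is_square_in_def subfield_q_def by auto
    have "s = y \<or> s = - y" using y(2) P(3) power2_eq_iff[of s y] by simp
    hence "s ^ q = s" using y(1) neg_q by auto
    hence "- s = s" using P(2) by simp
    thus False using neg_self P(1) by blast
  qed
  thus ?thesis unfolding delta_q_def by simp
qed

lemma nsq_two:
  assumes b0: "(b::'a) \<noteq> 0" and nsq: "\<not> is_square_in (subfield_q q) (trace_q q b)"
  shows "delta_q q b = 2"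
proof -
  define t where "t = trace_q q b"
  have tq: "t ^ q = t" unfolding t_def trace_q_def by (simp add: add_q invol add.commute)
  have t0: "t \<noteq> 0"
  proof
    assume "t = 0"
    hence "is_square_in (subfield_q q) (trace_q q b)"
      unfolding is_square_in_def subfield_q_def t_def using q_ge3
      by (auto intro!: bexI[where x=0] simp: zero_power)
    thus False using nsq by simp
  qed
  obtain s0 where s0: "s0 ^ 2 = t" using sq_exists[OF tq t0] by blast
  have s00: "s0 \<noteq> 0" using s0 t0 by auto
  have good: "2 * (b / s) ^ (q + 1) + (b / s) ^ 2 = b" if s: "s ^ 2 = t" for s
  proof -
    have sn0: "s \<noteq> 0" using s t0 by auto
    have "(s ^ q) ^ 2 = (s ^ 2) ^ q" by (metis power_mult mult.commute)
    hence "(s ^ q) ^ 2 = s ^ 2" using s tq by simp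
    hence "s ^ q = s \<or> s ^ q = - s" using power2_eq_iff[of "s ^ q" s] by simp
    moreover have "s ^ q \<noteq> s"
    proof
      assume "s ^ q = s"
      hence "is_square_in (subfield_q q) (trace_q q b)"
        unfolding is_square_in_def subfield_q_def using s t_def by auto
      thus False using nsq by simp
    qed
    ultimately have sq: "s ^ q = - s" by simp
    have "(b / s) ^ q = - (b ^ q / s)" by (simp add: power_divide sq)
    hence "b / s - (b / s) ^ q = t / s" unfolding t_def trace_q_def by (simp add: add_divide_distrib)
    also have "\<dots> = s" using s[symmetric] sn0 by (simp add: power2_eq_square)
    finally have "b / s - (b / s) ^ q = s" .
    hence "(b / s) * (b / s - (b / s) ^ q) = b" using sn0 by simp
    thus ?thesis by (simp only: g_eq)
  qed
  have "{u. 2 * u ^ (q + 1) + u ^ 2 = b} = {b / s0, b / (- s0)}"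
  proof (rule set_eqI, rule iffI)
    fix u assume "u \<in> {u. 2 * u ^ (q + 1) + u ^ 2 = b}"
    hence gu: "2 * u ^ (q + 1) + u ^ 2 = b" by simp
    define s where "s = u - u ^ q"
    note P = sol_props[OF b0 gu, folded s_def]
    have "s = s0 \<or> s = - s0" using P(3) s0 t_def power2_eq_iff[of s s0] by simp
    moreover have "u = b / s" using P(1) P(4) by (simp add: field_simps)
    ultimately show "u \<in> {b / s0, b / (- s0)}" by auto
  next
    fix u assume "u \<in> {b / s0, b / (- s0)}"
    thus "u \<in> {u. 2 * u ^ (q + 1) + u ^ 2 = b}" using good[OF s0] good[of "- s0"] s0 by auto
  qed
  moreover have "b / s0 \<noteq> b / (- s0)"
  proof
    assume "b / s0 = b / (- s0)"
    hence "- (b / s0) = b / s0" by simp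
    hence "b / s0 = 0" by (rule neg_self)
    thus False using b0 s00 by simp
  qed
  ultimately show ?thesis unfolding delta_q_def by simp
qed


lemma delta_cases: "(b::'a) \<noteq> 0 \<Longrightarrow> delta_q q b = 0 \<or> delta_q q b = 2"
  using sq_zero nsq_two by blast

lemma delta0: "delta_q q (0::'a) = q"
proof -
  have "{u::'a. 2 * u ^ (q + 1) + u ^ 2 = 0} = {x. x ^ q = x}"
  proof (rule set_eqI)
    fix u :: 'a
    have "2 * u ^ (q + 1) + u ^ 2 = 0 \<longleftrightarrow> u * (u - u ^ q) = 0" by (simp only: g_eq)
    also have "\<dots> \<longleftrightarrow> u ^ q = u" using q_ge3 by (auto simp: zero_power)
    finally show "u \<in> {u::'a. 2 * u ^ (q + 1) + u ^ 2 = 0} \<longleftrightarrow> u \<in> {x. x ^ q = x}" by simp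
  qed
  thus ?thesis unfolding delta_q_def using card_F by simp
qed

lemma sum_delta: "(\<Sum>b\<in>UNIV. delta_q q (b::'a)) = q * q"
proof -
  have "(UNIV::'a set) = (\<Union>b\<in>UNIV. {u. 2 * u ^ (q + 1) + u ^ 2 = b})" by auto
  hence "card (UNIV::'a set) = card (\<Union>b\<in>UNIV. {u::'a. 2 * u ^ (q + 1) + u ^ 2 = b})" by simp
  also have "\<dots> = (\<Sum>b\<in>UNIV. card {u::'a. 2 * u ^ (q + 1) + u ^ 2 = b})"
    by (rule card_UN_disjoint) auto
  finally show ?thesis using Qc unfolding delta_q_def by simp
qed

lemma counts:
  "card {b::'a. b \<noteq> 0 \<and> delta_q q b = 2} = (q ^ 2 - q) div 2 \<and>
   card {b::'a. b \<noteq> 0 \<and> delta_q q b = 0} = (q ^ 2 + q - 2) div 2"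
proof -
  define U where "U = {b::'a. b \<noteq> 0}"
  define B2 where "B2 = {b::'a. b \<noteq> 0 \<and> delta_q q b = 2}"
  define B0 where "B0 = {b::'a. b \<noteq> 0 \<and> delta_q q b = 0}"
  have "(\<Sum>b\<in>UNIV. delta_q q (b::'a)) = delta_q q (0::'a) + (\<Sum>b\<in>U. delta_q q b)"
  proof -
    have "U = UNIV - {0}" unfolding U_def by auto
    thus ?thesis by (simp add: sum.remove[of UNIV 0])
  qed
  hence e1: "q * q = q + (\<Sum>b\<in>U. delta_q q b)" using sum_delta delta0 by simp
  have "(\<Sum>b\<in>U. delta_q q b) = (\<Sum>b\<in>B2. delta_q q b)"
    by (rule sum.mono_neutral_right) (auto simp: U_def B2_def dest: delta_cases)
  also have "\<dots> = (\<Sum>b\<in>B2. 2)" by (rule sum.cong) (auto simp: B2_def)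
  finally have e2: "q * q = q + 2 * card B2" using e1 by simp
  have "U = B0 \<union> B2" "B0 \<inter> B2 = {}" unfolding U_def B0_def B2_def using delta_cases by auto
  hence "card U = card B0 + card B2" by (simp add: card_Un_disjoint)
  hence e3: "q * q - 1 = card B0 + card B2" using card_nz unfolding U_def by simp
  have qq: "q \<le> q * q" by simp
  have c2: "card B2 = (q * q - q) div 2" using e2 by simp
  have "2 * card B0 = q * q + q - 2" using e2 e3 q_ge3 qq by linarith
  hence c0: "card B0 = (q * q + q - 2) div 2" by simp
  show ?thesis using c2 c0 unfolding B0_def B2_def by (simp add: power2_eq_square)
qed

end

theorem proposition4:
  fixes m :: nat
  assumes "m \<ge> 1"
    and "card (UNIV :: 'a::{field,finite} set) = 3 ^ (2 * m)"
  defines "q \<equiv> (3::nat) ^ m"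
  shows "(\<forall>b::'a. b \<noteq> 0 \<longrightarrow>
            (\<not> is_square_in (subfield_q q) (trace_q q b) \<longrightarrow> delta_q q b = 2) \<and>
            (is_square_in (subfield_q q) (trace_q q b) \<longrightarrow> delta_q q b = 0))
       \<and> card {b::'a. b \<noteq> 0 \<and> delta_q q b = 0} = (q ^ 2 + q - 2) div 2
       \<and> card {b::'a. b \<noteq> 0 \<and> delta_q q b = 2} = (q ^ 2 - q) div 2"
proof -
  have Qc: "card (UNIV::'a set) = q * q"
    using assms(2) unfolding q_def by (simp add: power_mult[symmetric] power_add[symmetric] mult_2)
  have "(of_nat (card (UNIV::'a set)) :: 'a) = 0" by (rule of_nat_card_zero)
  hence "(3::'a) ^ (2 * m) = 0" using assms(2) by simp
  hence three: "(3::'a) = 0" by simp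
  have qd: "q = 3 ^ m" by (simp add: q_def)
  show ?thesis
    using sq_zero[OF three Qc qd assms(1)] nsq_two[OF three Qc qd assms(1)]
      counts[OF three Qc qd assms(1)] by blast
qed

end
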